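(* Let $\Omega$ be a domain in $\mathbb{C}^n$ satisfying property BR, and suppose that the absolute Bergman projection $P^+_{\Omega}:L^{p_0}(\Omega)\to L^{p_0}(\Omega)$ is bounded for some $1<p_0<\infty$. Then the Berezin transform $B_{\Omega}$ extends to a bounded operator $B_{\Omega}:L^p(\Omega)\to L^p(\Omega)$ for all $p_0\leq p\leq \infty$, and \[\|B_{\Omega}\|_{L^{p_0}} \leq \sup\left\{\frac{|K_{\Omega}(w,z)|}{K_{\Omega}(z,z)}:z,w\in \Omega \right\} \|P^+_{\Omega}\|_{L^{p_0}}.\]
   Context: For a domain $\Omega\subset\mathbb{C}^n$, $A^2(\Omega)$ is the Bergman space of square-integrable holomorphic functions, and $K_{\Omega}:\Omega\times\Omega\to\mathbb{C}$ is its Bergman kernel (the reproducing kernel of the orthogonal projection $P_\Omega:L^2(\Omega)\to A^2(\Omega)$). $\Omega$ satisfies property BR if $K_{\Omega}(z,z)\neq 0$ for all $z\in\Omega$ and $\sup\{|K_{\Omega}(w,z)|/K_{\Omega}(z,z): z,w\in\Omega\}<\infty$. When $K_\Omega(z,z)\neq0$ for all $z$, the normalized kernel is $k_z^{\Omega}(w)=K_{\Omega}(w,z)/\sqrt{K_{\Omega}(z,z)}$, and the Berezin transform of $\phi\in L^\infty(\Omega)$ is $B_{\Omega}\phi(z)=\langle P_\Omega(\phi k^\Omega_z),k^\Omega_z\rangle=\int_\Omega \phi(w)\,\frac{|K_{\Omega}(w,z)|^2}{K_{\Omega}(z,z)}\,dV(w)$. The absolute Bergman projection is $P^+_{\Omega}f(z)=\int_{\Omega}|K_{\Omega}(z,w)|f(w)\,dV(w)$.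 $\|\cdot\|_{L^p}$ denotes the $L^p(\Omega)$ norm (with respect to Lebesgue measure $dV$) and the corresponding operator norm. *)

theory Defs
  imports "HOL-Analysis.Analysis"
begin

text \<open>Points of C^n are modelled as complex ^ 'n (n = CARD('n)); measures are Lebesgue
  measure restricted to the domain.\<close>

definition domain_Cn :: "(complex ^ 'n) set \<Rightarrow> bool" where
  "domain_Cn \<Omega> \<longleftrightarrow> open \<Omega> \<and> connected \<Omega> \<and> \<Omega> \<noteq> {}"

definition holo_Cn :: "(complex ^ 'n) set \<Rightarrow> (complex ^ 'n \<Rightarrow> complex) \<Rightarrow> bool" where
  "holo_Cn \<Omega> f \<longleftrightarrow> (\<forall>z\<in>\<Omega>. \<exists>L. (f has_derivative L) (at z) \<and>
      (\<forall>c v. L (c *s v) = c * L v))"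

definition memLp :: "(complex ^ 'n) set \<Rightarrow> ereal \<Rightarrow> (complex ^ 'n \<Rightarrow> complex) \<Rightarrow> bool" where
  "memLp \<Omega> p f \<longleftrightarrow> f \<in> borel_measurable (lebesgue_on \<Omega>) \<and>
     (if p = \<infinity> then (\<exists>C. AE x in lebesgue_on \<Omega>. norm (f x) \<le> C)
      else integrable (lebesgue_on \<Omega>) (\<lambda>x. norm (f x) powr real_of_ereal p))"

definition Lpnorm :: "(complex ^ 'n) set \<Rightarrow> ereal \<Rightarrow> (complex ^ 'n \<Rightarrow> complex) \<Rightarrow> real" where
  "Lpnorm \<Omega> p f =
     (if p = \<infinity> then Inf {C. C \<ge> 0 \<and> (AE x in lebesgue_on \<Omega>. norm (f x) \<le> C)}
      else (\<integral>x. norm (f x) powr real_of_ereal p \<partial>lebesgue_on \<Omega>) powr (1 / real_of_ereal p))"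

definition Lp_opnorm :: "(complex ^ 'n) set \<Rightarrow> ereal \<Rightarrow>
    ((complex ^ 'n \<Rightarrow> complex) \<Rightarrow> (complex ^ 'n \<Rightarrow> complex)) \<Rightarrow> real" where
  "Lp_opnorm \<Omega> p T = Inf {C. C \<ge> 0 \<and> (\<forall>f. memLp \<Omega> p f \<longrightarrow> Lpnorm \<Omega> p (T f) \<le> C * Lpnorm \<Omega> p f)}"

definition bergman_space :: "(complex ^ 'n) set \<Rightarrow> (complex ^ 'n \<Rightarrow> complex) set" where
  "bergman_space \<Omega> = {f. holo_Cn \<Omega> f \<and> memLp \<Omega> 2 f}"

definition is_bergman_kernel :: "(complex ^ 'n) set \<Rightarrow> (complex ^ 'n \<Rightarrow> complex ^ 'n \<Rightarrow> complex) \<Rightarrow> bool" where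
  "is_bergman_kernel \<Omega> K \<longleftrightarrow>
     (\<forall>z\<in>\<Omega>. (\<lambda>w. K w z) \<in> bergman_space \<Omega>) \<and>
     (\<forall>z\<in>\<Omega>. \<forall>f\<in>bergman_space \<Omega>. f z = (\<integral>w. f w * cnj (K w z) \<partial>lebesgue_on \<Omega>))"

definition BR_const :: "(complex ^ 'n) set \<Rightarrow> (complex ^ 'n \<Rightarrow> complex ^ 'n \<Rightarrow> complex) \<Rightarrow> real" where
  "BR_const \<Omega> K = Sup {cmod (K w z) / Re (K z z) | z w. z \<in> \<Omega> \<and> w \<in> \<Omega>}"

definition property_BR :: "(complex ^ 'n) set \<Rightarrow> (complex ^ 'n \<Rightarrow> complex ^ 'n \<Rightarrow> complex) \<Rightarrow> bool" where
  "property_BR \<Omega> K \<longleftrightarrow> (\<forall>z\<in>\<Omega>. K z z \<noteq> 0) \<and>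
      bdd_above {cmod (K w z) / Re (K z z) | z w. z \<in> \<Omega> \<and> w \<in> \<Omega>}"

definition berezin :: "(complex ^ 'n) set \<Rightarrow> (complex ^ 'n \<Rightarrow> complex ^ 'n \<Rightarrow> complex) \<Rightarrow>
    (complex ^ 'n \<Rightarrow> complex) \<Rightarrow> complex ^ 'n \<Rightarrow> complex" where
  "berezin \<Omega> K \<phi> z = (\<integral>w. \<phi> w * of_real ((cmod (K w z))\<^sup>2 / Re (K z z)) \<partial>lebesgue_on \<Omega>)"

definition abs_bergman_proj :: "(complex ^ 'n) set \<Rightarrow> (complex ^ 'n \<Rightarrow> complex ^ 'n \<Rightarrow> complex) \<Rightarrow>
    (complex ^ 'n \<Rightarrow> complex) \<Rightarrow> complex ^ 'n \<Rightarrow> complex" where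
  "abs_bergman_proj \<Omega> K f z = (\<integral>w. of_real (cmod (K z w)) * f w \<partial>lebesgue_on \<Omega>)"

definition abs_proj_bounded :: "(complex ^ 'n) set \<Rightarrow> (complex ^ 'n \<Rightarrow> complex ^ 'n \<Rightarrow> complex) \<Rightarrow>
    ereal \<Rightarrow> bool" where
  "abs_proj_bounded \<Omega> K p \<longleftrightarrow> (\<exists>C. \<forall>f. memLp \<Omega> p f \<longrightarrow>
      (AE z in lebesgue_on \<Omega>. integrable (lebesgue_on \<Omega>) (\<lambda>w. of_real (cmod (K z w)) * f w)) \<and>
      memLp \<Omega> p (abs_bergman_proj \<Omega> K f) \<and>
      Lpnorm \<Omega> p (abs_bergman_proj \<Omega> K f) \<le> C * Lpnorm \<Omega> p f)"

end

theory Submission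
  imports Defs
begin

lemma sep_cont_measurable:
  fixes G :: "'a::euclidean_space \<Rightarrow> 'm \<Rightarrow> 'b::metric_space"
  assumes Om: "open \<Omega>" "\<Omega> \<noteq> {}"
  assumes h: "h \<in> borel_measurable M" "\<And>m. m \<in> space M \<Longrightarrow> h m \<in> \<Omega>"
  assumes Gm: "\<And>x. x \<in> \<Omega> \<Longrightarrow> (\<lambda>m. G x m) \<in> borel_measurable M"
  assumes Gc: "\<And>m. m \<in> space M \<Longrightarrow> continuous_on \<Omega> (\<lambda>x. G x m)"
  shows "(\<lambda>m. G (h m) m) \<in> borel_measurable M"
proof -
  obtain D :: "'a set" where D: "countable D" "\<And>X. open X \<Longrightarrow> X \<noteq> {} \<Longrightarrow> \<exists>d\<in>D. d \<in> X"
    by (rule countable_dense_setE) blast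
  define E where "E = D \<inter> \<Omega>"
  have En: "E \<noteq> {}" using D(2)[OF Om(1,2)] unfolding E_def by blast
  have Ec: "countable E" using D(1) unfolding E_def by simp
  define e where "e = from_nat_into E"
  have eE: "e k \<in> \<Omega>" for k using from_nat_into[OF En] unfolding e_def E_def by auto
  have close: "\<exists>k. dist z (e k) < \<epsilon>" if "z \<in> \<Omega>" "\<epsilon> > 0" for z \<epsilon>
  proof -
    have "open (ball z \<epsilon> \<inter> \<Omega>)" "ball z \<epsilon> \<inter> \<Omega> \<noteq> {}" using Om that centre_in_ball by blast+
    then obtain d where "d \<in> D" "d \<in> ball z \<epsilon> \<inter> \<Omega>" using D(2) by blast
    then have "d \<in> E" "dist z d < \<epsilon>" unfolding E_def by auto
    then obtain k where "d = e k" using range_from_nat_into[OF En Ec] unfolding e_def by blast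
    then show ?thesis using \<open>dist z d < \<epsilon>\<close> by blast
  qed
  define idx where "idx n m = (LEAST k. dist (h m) (e k) < 1 / Suc n)" for n m
  have idxm: "idx n \<in> measurable M (count_space UNIV)" for n
    unfolding idx_def using h(1) by measurable
  have fm: "(\<lambda>m. G (e (idx n m)) m) \<in> borel_measurable M" for n
    by (rule measurable_compose_countable'[where I=UNIV, OF _ idxm]) (auto intro: Gm eE)
  show ?thesis
  proof (rule borel_measurable_LIMSEQ_metric[OF fm])
    fix m assume m: "m \<in> space M"
    have d: "dist (h m) (e (idx n m)) < 1 / Suc n" for n
      unfolding idx_def by (rule LeastI_ex) (use close h(2)[OF m] in auto)
    have "(\<lambda>n. e (idx n m)) \<longlonglongrightarrow> h m"
    proof (subst tendsto_dist_iff, rule tendsto_sandwich[of "\<lambda>_. 0" _ _ "\<lambda>n. 1 / Suc n"])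
      show "\<forall>\<^sub>F n in sequentially. 0 \<le> dist (e (idx n m)) (h m)" by simp
      show "\<forall>\<^sub>F n in sequentially. dist (e (idx n m)) (h m) \<le> 1 / Suc n"
        using d by (simp add: dist_commute less_imp_le)
      show "(\<lambda>n. 1 / real (Suc n)) \<longlonglongrightarrow> 0" using LIMSEQ_inverse_real_of_nat by (simp add: inverse_eq_divide)
    qed simp
    moreover have "isCont (\<lambda>x. G x m) (h m)"
      using Gc[OF m] h(2)[OF m] Om(1) continuous_on_eq_continuous_at by blast
    ultimately show "(\<lambda>n. G (e (idx n m)) m) \<longlonglongrightarrow> G (h m) m"
      by (rule isCont_tendsto_compose[rotated])
  qed
qed

lemma powr_tangent:
  fixes r a x :: real
  assumes r: "1 \<le> r" and a: "0 \<le> a" and x: "0 \<le> x"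
  shows "a powr r + r * a powr (r - 1) * (x - a) \<le> x powr r"
proof (cases "a = 0")
  case True then show ?thesis by simp
next
  case False
  then have a0: "0 < a" using a by simp
  show ?thesis
  proof (cases "x = 0")
    case True
    have "r * a powr (r - 1) * a = r * a powr r"
      using a0 by (simp add: powr_diff)
    have "1 * a powr r \<le> r * a powr r" using r by (intro mult_right_mono) auto
    moreover have "r * a powr (r - 1) * (x - a) = - (r * a powr (r - 1) * a)" using True by simp
    moreover have "x powr r = 0" using True by simp
    ultimately show ?thesis using \<open>r * a powr (r - 1) * a = r * a powr r\<close> by linarith
  next
    case False
    then have x0: "x \<in> {0<..}" using x by simp
    have "x powr r - a powr r \<ge> r * a powr (r - 1) * (x - a)"
      by (rule convex_on_imp_above_tangent[OF powr_convex[OF r]])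
         (use a0 x0 in \<open>auto simp: interior_open intro: has_field_derivative_at_within has_real_derivative_powr\<close>)
    then show ?thesis by simp
  qed
qed

lemma weighted_jensen:
  fixes g k :: "'a \<Rightarrow> real"
  assumes r: "1 \<le> r"
    and g: "\<And>x. x \<in> space M \<Longrightarrow> 0 \<le> g x" and k: "\<And>x. x \<in> space M \<Longrightarrow> 0 \<le> k x"
    and ik: "integrable M k" and k1: "integral\<^sup>L M k = 1"
    and igk: "integrable M (\<lambda>x. g x * k x)"
    and igrk: "integrable M (\<lambda>x. g x powr r * k x)"
  shows "(\<integral>x. g x * k x \<partial>M) powr r \<le> (\<integral>x. g x powr r * k x \<partial>M)"
proof -
  define a where "a = (\<integral>x. g x * k x \<partial>M)"
  have a0: "0 \<le> a" unfolding a_def by (rule integral_nonneg_AE) (use g k in auto)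
  have eq: "(\<lambda>x. (a powr r + r * a powr (r - 1) * (g x - a)) * k x)
       = (\<lambda>x. (a powr r - r * a powr (r - 1) * a) * k x + (r * a powr (r - 1)) * (g x * k x))"
    by (auto simp: algebra_simps)
  have "(\<integral>x. (a powr r + r * a powr (r - 1) * (g x - a)) * k x \<partial>M) \<le> (\<integral>x. g x powr r * k x \<partial>M)"
  proof (rule integral_mono)
    show "integrable M (\<lambda>x. (a powr r + r * a powr (r - 1) * (g x - a)) * k x)"
      unfolding eq by (rule Bochner_Integration.integrable_add[OF integrable_mult_right[OF ik] integrable_mult_right[OF igk]])
    show "integrable M (\<lambda>x. g x powr r * k x)" by (rule igrk)
    fix x assume "x \<in> space M"
    then show "(a powr r + r * a powr (r - 1) * (g x - a)) * k x \<le> g x powr r * k x"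
      using powr_tangent[OF r a0 g] k by (auto intro: mult_right_mono)
  qed
  moreover have "(\<integral>x. (a powr r + r * a powr (r - 1) * (g x - a)) * k x \<partial>M) = a powr r"
  proof -
    have "(\<integral>x. (a powr r + r * a powr (r - 1) * (g x - a)) * k x \<partial>M)
       = (a powr r - r * a powr (r - 1) * a) * integral\<^sup>L M k + (r * a powr (r - 1)) * a"
      unfolding eq using ik igk unfolding a_def by simp
    then show ?thesis using k1 by simp
  qed
  ultimately show ?thesis unfolding a_def by simp
qed

lemma sf_lebesgue: "sigma_finite_measure (lebesgue :: ('a::euclidean_space) measure)"
proof -
  obtain A :: "'a set set" where A: "countable A" "A \<subseteq> sets lborel" "\<Union>A = space lborel"
     "\<forall>a\<in>A. emeasure lborel a \<noteq> \<infinity>"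
    using sigma_finite_measure.sigma_finite_countable[OF sigma_finite_lborel] by blast
  show ?thesis
    unfolding sigma_finite_measure_def
    apply (rule exI[of _ A])
    using A by (auto simp: emeasure_completion)
qed
lemma sf_lebesgue_on: "S \<in> sets lebesgue \<Longrightarrow> sigma_finite_measure (lebesgue_on S)"
  by (rule sigma_finite_measure_restrict_space[OF sf_lebesgue])
locale bsetup =
  fixes \<Omega> :: "(complex ^ 'n) set" and K :: "complex ^ 'n \<Rightarrow> complex ^ 'n \<Rightarrow> complex"
  assumes Om: "open \<Omega>" "\<Omega> \<noteq> {}" and bk: "is_bergman_kernel \<Omega> K" and br: "property_BR \<Omega> K"
begin

lemma Osets: "\<Omega> \<in> sets lebesgue"
  using Om(1) by (metis borel_open sets_completionI_sets sets_lborel)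

lemma Kberg: "z \<in> \<Omega> \<Longrightarrow> (\<lambda>w. K w z) \<in> bergman_space \<Omega>"
  using bk unfolding is_bergman_kernel_def by blast

lemma Krep: "z \<in> \<Omega> \<Longrightarrow> f \<in> bergman_space \<Omega> \<Longrightarrow> f z = (\<integral>w. f w * cnj (K w z) \<partial>lebesgue_on \<Omega>)"
  using bk unfolding is_bergman_kernel_def by blast

lemma Kcont1: assumes "z \<in> \<Omega>" shows "continuous_on \<Omega> (\<lambda>w. K w z)"
proof -
  have h: "holo_Cn \<Omega> (\<lambda>w. K w z)" using Kberg[OF assms] unfolding bergman_space_def by simp
  show ?thesis
  proof (rule continuous_at_imp_continuous_on, rule ballI)
    fix w assume "w \<in> \<Omega>"
    then obtain L where "((\<lambda>w. K w z) has_derivative L) (at w)" using h unfolding holo_Cn_def by blast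
    then show "isCont (\<lambda>w. K w z) w" by (rule has_derivative_continuous)
  qed
qed

lemma Kherm: assumes "z \<in> \<Omega>" "w \<in> \<Omega>" shows "K z w = cnj (K w z)"
proof -
  have 1: "K z w = (\<integral>v. K v w * cnj (K v z) \<partial>lebesgue_on \<Omega>)"
    using Krep[OF assms(1) Kberg[OF assms(2)]] .
  have 2: "K w z = (\<integral>v. K v z * cnj (K v w) \<partial>lebesgue_on \<Omega>)"
    using Krep[OF assms(2) Kberg[OF assms(1)]] .
  have "cnj (K w z) = cnj (\<integral>v. K v z * cnj (K v w) \<partial>lebesgue_on \<Omega>)" using 2 by simp
  also have "\<dots> = (\<integral>v. cnj (K v z * cnj (K v w)) \<partial>lebesgue_on \<Omega>)" by (rule Bochner_Integration.integral_cnj[symmetric])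
  also have "\<dots> = (\<integral>v. K v w * cnj (K v z) \<partial>lebesgue_on \<Omega>)" by (simp add: mult.commute)
  finally show ?thesis using 1 by simp
qed

lemma Kcont2: assumes "w \<in> \<Omega>" shows "continuous_on \<Omega> (\<lambda>z. K w z)"
proof -
  have "continuous_on \<Omega> (\<lambda>z. cnj (K z w))"
    by (intro continuous_on_cnj Kcont1 assms)
  then show ?thesis
  proof (rule continuous_on_cong[THEN iffD1, rotated 2])
    fix x assume "x \<in> \<Omega>"
    then show "cnj (K x w) = K w x" using Kherm[OF assms \<open>x \<in> \<Omega>\<close>] by simp
  qed simp
qed

lemma Km1: "z \<in> \<Omega> \<Longrightarrow> (\<lambda>w. K w z) \<in> borel_measurable (lebesgue_on \<Omega>)"
  by (rule continuous_imp_measurable_on_sets_lebesgue[OF Kcont1 Osets])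

lemma Km2: "w \<in> \<Omega> \<Longrightarrow> (\<lambda>z. K w z) \<in> borel_measurable (lebesgue_on \<Omega>)"
  by (rule continuous_imp_measurable_on_sets_lebesgue[OF Kcont2 Osets])

lemma idm: "(\<lambda>x. x) \<in> borel_measurable (lebesgue_on \<Omega>)"
  by (rule continuous_imp_measurable_on_sets_lebesgue[OF continuous_on_id Osets])

lemma Kjoint: "(\<lambda>p. K (snd p) (fst p)) \<in> borel_measurable (lebesgue_on \<Omega> \<Otimes>\<^sub>M lebesgue_on \<Omega>)"
proof (rule sep_cont_measurable[where G="\<lambda>x p. K x (fst p)", OF Om])
  show "snd \<in> borel_measurable (lebesgue_on \<Omega> \<Otimes>\<^sub>M lebesgue_on \<Omega>)"
    using measurable_compose[OF measurable_snd[of "lebesgue_on \<Omega>" "lebesgue_on \<Omega>"] idm] by simp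
  show "snd m \<in> \<Omega>" if "m \<in> space (lebesgue_on \<Omega> \<Otimes>\<^sub>M lebesgue_on \<Omega>)" for m
    using that by (auto simp: space_pair_measure)
  show "(\<lambda>p. K x (fst p)) \<in> borel_measurable (lebesgue_on \<Omega> \<Otimes>\<^sub>M lebesgue_on \<Omega>)" if "x \<in> \<Omega>" for x
    using measurable_compose[OF measurable_fst[of "lebesgue_on \<Omega>" "lebesgue_on \<Omega>"] Km2[OF that]] by simp
  show "continuous_on \<Omega> (\<lambda>x. K x (fst m))" if "m \<in> space (lebesgue_on \<Omega> \<Otimes>\<^sub>M lebesgue_on \<Omega>)" for m
    using that by (intro Kcont1) (auto simp: space_pair_measure)
qed

lemma Kdiagm: "(\<lambda>z. K z z) \<in> borel_measurable (lebesgue_on \<Omega>)"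
  by (rule sep_cont_measurable[where G="\<lambda>x z. K x z" and h="\<lambda>z. z", OF Om idm])
     (auto intro: Km2 Kcont1)

end
context bsetup begin

abbreviation "lo \<equiv> lebesgue_on \<Omega>"

lemma Ksq_int: assumes "z \<in> \<Omega>" shows "integrable lo (\<lambda>w. (cmod (K w z))^2)"
proof -
  have "memLp \<Omega> 2 (\<lambda>w. K w z)" using Kberg[OF assms] unfolding bergman_space_def by simp
  then have "integrable lo (\<lambda>w. cmod (K w z) powr 2)" unfolding memLp_def by simp
  then show ?thesis by simp
qed

lemma Kdiag: assumes "z \<in> \<Omega>" shows "K z z = of_real (\<integral>w. (cmod (K w z))^2 \<partial>lo)"
proof -
  have "K z z = (\<integral>w. K w z * cnj (K w z) \<partial>lo)" using Krep[OF assms Kberg[OF assms]] .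
  also have "\<dots> = (\<integral>w. of_real ((cmod (K w z))^2) \<partial>lo)" by (simp only: complex_norm_square)
  also have "\<dots> = of_real (\<integral>w. (cmod (K w z))^2 \<partial>lo)" by (rule integral_complex_of_real)
  finally show ?thesis .
qed

lemma ReKdiag: assumes "z \<in> \<Omega>" shows "Re (K z z) = (\<integral>w. (cmod (K w z))^2 \<partial>lo)"
  using Kdiag[OF assms] by (metis Re_complex_of_real)

lemma Kdiag_pos: assumes "z \<in> \<Omega>" shows "0 < Re (K z z)"
proof -
  have "0 \<le> Re (K z z)" unfolding ReKdiag[OF assms] by (rule integral_nonneg_AE) simp
  moreover have "Re (K z z) \<noteq> 0"
    using Kdiag[OF assms] br assms unfolding property_BR_def ReKdiag[OF assms] by auto
  ultimately show ?thesis by simp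
qed

definition "Bc = BR_const \<Omega> K"

lemma BR_upper: assumes "z \<in> \<Omega>" "w \<in> \<Omega>" shows "cmod (K w z) / Re (K z z) \<le> Bc"
  unfolding Bc_def BR_const_def
  by (rule cSup_upper) (use assms br in \<open>auto simp: property_BR_def\<close>)

lemma BR_le: assumes "z \<in> \<Omega>" "w \<in> \<Omega>" shows "cmod (K w z) \<le> Bc * Re (K z z)"
  using BR_upper[OF assms] Kdiag_pos[OF assms(1)] by (simp add: divide_le_eq)

lemma Bc_pos: "0 < Bc"
proof -
  obtain z where z: "z \<in> \<Omega>" using Om by auto
  have "K z z \<noteq> 0" using br z unfolding property_BR_def by auto
  then have "0 < cmod (K z z) / Re (K z z)" using Kdiag_pos[OF z] by simp
  then show ?thesis using BR_upper[OF z z] by simp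
qed

definition kk where "kk z w = (cmod (K w z))^2 / Re (K z z)"

lemma kk_nonneg: assumes "z \<in> \<Omega>" shows "0 \<le> kk z w"
  using Kdiag_pos[OF assms] unfolding kk_def by simp

lemma kk_le: assumes "z \<in> \<Omega>" "w \<in> \<Omega>" shows "kk z w \<le> Bc * cmod (K z w)"
proof -
  have "kk z w = cmod (K w z) * (cmod (K w z) / Re (K z z))" unfolding kk_def by (simp add: power2_eq_square)
  also have "\<dots> \<le> cmod (K w z) * Bc" by (rule mult_left_mono[OF BR_upper[OF assms]]) simp
  also have "cmod (K w z) = cmod (K z w)" using Kherm[OF assms] by simp
  finally show ?thesis by (simp add: mult.commute)
qed

lemma kk_bdd: assumes "z \<in> \<Omega>" "w \<in> \<Omega>" shows "kk z w \<le> Bc * (Bc * Re (K z z))"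
proof -
  have "kk z w = cmod (K w z) * (cmod (K w z) / Re (K z z))" unfolding kk_def by (simp add: power2_eq_square)
  also have "\<dots> \<le> (Bc * Re (K z z)) * Bc"
    by (rule mult_mono[OF BR_le[OF assms] BR_upper[OF assms]]) (use Bc_pos Kdiag_pos[OF assms(1)] in auto)
  finally show ?thesis by (simp add: mult_ac)
qed

lemma kk_meas: "z \<in> \<Omega> \<Longrightarrow> kk z \<in> borel_measurable lo"
  unfolding kk_def[abs_def] using Km1 by measurable

lemma kk_int: assumes "z \<in> \<Omega>" shows "integrable lo (kk z)"
  unfolding kk_def[abs_def] using Ksq_int[OF assms] by (intro integrable_divide)

lemma kk_one: assumes "z \<in> \<Omega>" shows "(\<integral>w. kk z w \<partial>lo) = 1"
  unfolding kk_def using ReKdiag[OF assms] Kdiag_pos[OF assms] by simp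

lemma berezin_kk: "berezin \<Omega> K \<phi> z = (\<integral>w. \<phi> w * of_real (kk z w) \<partial>lo)"
  unfolding berezin_def kk_def ..

lemma berezin_meas: assumes phi: "\<phi> \<in> borel_measurable lo"
  shows "berezin \<Omega> K \<phi> \<in> borel_measurable lo"
proof -
  interpret sf: sigma_finite_measure lo by (rule sf_lebesgue_on[OF Osets])
  have "(\<lambda>p. \<phi> (snd p) * of_real ((cmod (K (snd p) (fst p)))^2 / Re (K (fst p) (fst p))))
     \<in> borel_measurable (lo \<Otimes>\<^sub>M lo)"
    using Kjoint measurable_compose[OF measurable_snd[of lo lo] phi]
       measurable_compose[OF measurable_fst[of lo lo] Kdiagm] by measurable
  then have "case_prod (\<lambda>z w. \<phi> w * of_real ((cmod (K w z))^2 / Re (K z z))) \<in> borel_measurable (lo \<Otimes>\<^sub>M lo)"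
    by (simp add: case_prod_beta')
  from sf.borel_measurable_lebesgue_integral[OF this]
  show ?thesis unfolding berezin_def[abs_def] .
qed

end
lemma powr_le_sum1:
  fixes x r q :: real
  assumes "0 \<le> x" "0 \<le> r" "r \<le> q" shows "x powr r \<le> x powr q + 1"
proof (cases "x \<le> 1")
  case True
  then have "x powr r \<le> 1" using assms by (simp add: powr_le1)
  then show ?thesis by (smt (verit) powr_ge_zero)
next
  case False
  then have "x powr r \<le> x powr q" using assms by (intro powr_mono) auto
  then show ?thesis by simp
qed

context bsetup begin

lemma int_norm_powr_kk:
  assumes z: "z \<in> \<Omega>" and phi: "\<phi> \<in> borel_measurable lo"
    and iq: "integrable lo (\<lambda>w. norm (\<phi> w) powr q)" and r: "0 \<le> r" "r \<le> q"
  shows "integrable lo (\<lambda>w. norm (\<phi> w) powr r * kk z w)"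
proof (rule Bochner_Integration.integrable_bound)
  define M where "M = Bc * (Bc * Re (K z z))"
  show "integrable lo (\<lambda>w. M * norm (\<phi> w) powr q + kk z w)"
    using iq kk_int[OF z] by (intro Bochner_Integration.integrable_add integrable_mult_right) auto
  show "(\<lambda>w. norm (\<phi> w) powr r * kk z w) \<in> borel_measurable lo"
    using phi kk_meas[OF z] by measurable
  show "AE w in lo. norm (norm (\<phi> w) powr r * kk z w) \<le> norm (M * norm (\<phi> w) powr q + kk z w)"
  proof (rule AE_I2)
    fix w assume "w \<in> space lo"
    then have w: "w \<in> \<Omega>" by simp
    have k0: "0 \<le> kk z w" by (rule kk_nonneg[OF z])
    have M0: "0 \<le> M" unfolding M_def using Bc_pos Kdiag_pos[OF z] by simp
    have "norm (norm (\<phi> w) powr r * kk z w) = norm (\<phi> w) powr r * kk z w" using k0 by simp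
    also have "\<dots> \<le> (norm (\<phi> w) powr q + 1) * kk z w"
      by (rule mult_right_mono[OF powr_le_sum1 k0]) (use r in auto)
    also have "\<dots> = norm (\<phi> w) powr q * kk z w + kk z w" by (simp add: algebra_simps)
    also have "\<dots> \<le> norm (\<phi> w) powr q * M + kk z w"
      using kk_bdd[OF z w] unfolding M_def by (intro add_right_mono mult_left_mono) auto
    also have "\<dots> = norm (M * norm (\<phi> w) powr q + kk z w)" using M0 k0 by (simp add: mult.commute)
    finally show "norm (norm (\<phi> w) powr r * kk z w) \<le> norm (M * norm (\<phi> w) powr q + kk z w)" .
  qed
qed

lemma int_phi_kk:
  fixes \<phi> :: "complex ^ 'n \<Rightarrow> complex"
  assumes z: "z \<in> \<Omega>" and phi: "\<phi> \<in> borel_measurable lo"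
    and iq: "integrable lo (\<lambda>w. norm (\<phi> w) powr q)" and q: "1 \<le> q"
  shows "integrable lo (\<lambda>w. \<phi> w * of_real (kk z w))"
proof (rule Bochner_Integration.integrable_bound)
  show "integrable lo (\<lambda>w. norm (\<phi> w) powr 1 * kk z w)"
    by (rule int_norm_powr_kk[OF z phi iq]) (use q in auto)
  show "(\<lambda>w. \<phi> w * of_real (kk z w)) \<in> borel_measurable lo"
    using phi kk_meas[OF z] by measurable
  show "AE w in lo. norm (\<phi> w * of_real (kk z w)) \<le> norm (norm (\<phi> w) powr 1 * kk z w)"
    by (rule AE_I2) (use kk_nonneg[OF z] in \<open>simp add: norm_mult\<close>)
qed

lemma int_phi_kk_inf:
  fixes \<phi> :: "complex ^ 'n \<Rightarrow> complex"
  assumes z: "z \<in> \<Omega>" and phi: "\<phi> \<in> borel_measurable lo"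
    and bd: "AE w in lo. norm (\<phi> w) \<le> C"
  shows "integrable lo (\<lambda>w. \<phi> w * of_real (kk z w))"
proof (rule Bochner_Integration.integrable_bound)
  show "integrable lo (\<lambda>w. \<bar>C\<bar> * kk z w)"
    using kk_int[OF z] by (intro integrable_mult_right)
  show "(\<lambda>w. \<phi> w * of_real (kk z w)) \<in> borel_measurable lo"
    using phi kk_meas[OF z] by measurable
  show "AE w in lo. norm (\<phi> w * of_real (kk z w)) \<le> norm (\<bar>C\<bar> * kk z w)"
    using bd
  proof (rule AE_mp, intro AE_I2 impI)
    fix w assume "w \<in> space lo" "norm (\<phi> w) \<le> C"
    then show "norm (\<phi> w * of_real (kk z w)) \<le> norm (\<bar>C\<bar> * kk z w)"
      using kk_nonneg[OF z, of w] by (simp add: norm_mult abs_mult mult_right_mono)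
  qed
qed

end
context bsetup begin

lemma P_real:
  fixes h :: "complex ^ 'n \<Rightarrow> real"
  shows "abs_bergman_proj \<Omega> K (\<lambda>w. of_real (h w)) z = of_real (\<integral>w. cmod (K z w) * h w \<partial>lo)"
  unfolding abs_bergman_proj_def by (simp flip: of_real_mult)

lemma pointwise:
  fixes \<phi> :: "complex ^ 'n \<Rightarrow> complex"
  assumes z: "z \<in> \<Omega>" and phi: "\<phi> \<in> borel_measurable lo"
    and iq: "integrable lo (\<lambda>w. norm (\<phi> w) powr q)" and r: "1 \<le> r" "r \<le> q"
    and I: "integrable lo (\<lambda>w. complex_of_real (cmod (K z w)) * complex_of_real (norm (\<phi> w) powr r))"
  shows "norm (berezin \<Omega> K \<phi> z) powr r
     \<le> Bc * norm (abs_bergman_proj \<Omega> K (\<lambda>w. of_real (norm (\<phi> w) powr r)) z)"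
proof -
  have I': "integrable lo (\<lambda>w. cmod (K z w) * norm (\<phi> w) powr r)"
    using I by (simp add: complex_of_real_integrable_eq flip: of_real_mult)
  have nP: "norm (abs_bergman_proj \<Omega> K (\<lambda>w. of_real (norm (\<phi> w) powr r)) z)
      = (\<integral>w. cmod (K z w) * norm (\<phi> w) powr r \<partial>lo)"
    unfolding P_real norm_of_real by (rule abs_of_nonneg, rule integral_nonneg_AE) simp
  define a where "a = (\<integral>w. norm (\<phi> w) * kk z w \<partial>lo)"
  have ig1: "integrable lo (\<lambda>w. norm (\<phi> w) * kk z w)"
    using int_norm_powr_kk[OF z phi iq, of 1] r by simp
  have igr: "integrable lo (\<lambda>w. norm (\<phi> w) powr r * kk z w)"
    using int_norm_powr_kk[OF z phi iq, of r] r by simp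
  have n1: "norm (berezin \<Omega> K \<phi> z) \<le> a"
  proof -
    have "norm (berezin \<Omega> K \<phi> z) \<le> (\<integral>w. norm (\<phi> w * of_real (kk z w)) \<partial>lo)"
      unfolding berezin_kk by (rule integral_norm_bound)
    also have "\<dots> = a" unfolding a_def
      by (rule Bochner_Integration.integral_cong) (use kk_nonneg[OF z] in \<open>auto simp: norm_mult\<close>)
    finally show ?thesis .
  qed
  have a0: "0 \<le> a" unfolding a_def by (rule integral_nonneg_AE) (use kk_nonneg[OF z] in auto)
  have n2: "a powr r \<le> (\<integral>w. norm (\<phi> w) powr r * kk z w \<partial>lo)"
    unfolding a_def
    by (rule weighted_jensen[OF r(1) _ _ kk_int[OF z] kk_one[OF z] ig1 igr]) (use kk_nonneg[OF z] in auto)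
  have n3: "(\<integral>w. norm (\<phi> w) powr r * kk z w \<partial>lo) \<le> (\<integral>w. Bc * (cmod (K z w) * norm (\<phi> w) powr r) \<partial>lo)"
  proof (rule integral_mono[OF igr])
    show "integrable lo (\<lambda>w. Bc * (cmod (K z w) * norm (\<phi> w) powr r))" using I' by simp
    fix w assume "w \<in> space lo"
    then have w: "w \<in> \<Omega>" by simp
    show "norm (\<phi> w) powr r * kk z w \<le> Bc * (cmod (K z w) * norm (\<phi> w) powr r)"
      using mult_left_mono[OF kk_le[OF z w], of "norm (\<phi> w) powr r"] by (simp add: mult_ac)
  qed
  have "norm (berezin \<Omega> K \<phi> z) powr r \<le> a powr r"
    by (rule powr_mono2) (use r n1 in auto)
  also have "\<dots> \<le> Bc * (\<integral>w. cmod (K z w) * norm (\<phi> w) powr r \<partial>lo)"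
    using n2 n3 by simp
  finally show ?thesis unfolding nP .
qed

end
context bsetup begin

lemma core:
  fixes \<phi> :: "complex ^ 'n \<Rightarrow> complex"
  assumes p0: "1 < p0" and H: "abs_proj_bounded \<Omega> K (ereal p0)"
    and C: "0 \<le> C" "\<And>f. memLp \<Omega> (ereal p0) f \<Longrightarrow>
         Lpnorm \<Omega> (ereal p0) (abs_bergman_proj \<Omega> K f) \<le> C * Lpnorm \<Omega> (ereal p0) f"
    and r: "1 \<le> r" and phi: "memLp \<Omega> (ereal (r * p0)) \<phi>"
  shows "memLp \<Omega> (ereal (r * p0)) (berezin \<Omega> K \<phi>) \<and>
     Lpnorm \<Omega> (ereal (r * p0)) (berezin \<Omega> K \<phi>) \<le> (Bc * C) powr (1 / r) * Lpnorm \<Omega> (ereal (r * p0)) \<phi>"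
proof -
  define q where "q = r * p0"
  have q1: "1 \<le> q" "r \<le> q" unfolding q_def using p0 r
    by (simp_all add: one_le_mult_iff, metis less_eq_real_def mult_le_cancel_left1 mult.commute order.trans zero_le_one)
  have phim: "\<phi> \<in> borel_measurable lo" and iq: "integrable lo (\<lambda>w. norm (\<phi> w) powr q)"
    using phi unfolding memLp_def q_def by auto
  define \<psi> where "\<psi> = (\<lambda>w. complex_of_real (norm (\<phi> w) powr r))"
  have psi_eq: "(\<lambda>w. norm (\<psi> w) powr p0) = (\<lambda>w. norm (\<phi> w) powr q)"
    unfolding \<psi>_def q_def by (simp add: powr_powr)
  have psi: "memLp \<Omega> (ereal p0) \<psi>"
    unfolding memLp_def using iq psi_eq unfolding \<psi>_def using phim by (simp; measurable)
  obtain C0 where H': "\<And>f. memLp \<Omega> (ereal p0) f \<Longrightarrow>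
      (AE z in lo. integrable lo (\<lambda>w. of_real (cmod (K z w)) * f w)) \<and>
      memLp \<Omega> (ereal p0) (abs_bergman_proj \<Omega> K f) \<and>
      Lpnorm \<Omega> (ereal p0) (abs_bergman_proj \<Omega> K f) \<le> C0 * Lpnorm \<Omega> (ereal p0) f"
    using H unfolding abs_proj_bounded_def by blast
  define P where "P = abs_bergman_proj \<Omega> K \<psi>"
  have AEI: "AE z in lo. integrable lo (\<lambda>w. of_real (cmod (K z w)) * \<psi> w)"
    and Pm: "memLp \<Omega> (ereal p0) P" using H'[OF psi] unfolding P_def by auto
  have iP: "integrable lo (\<lambda>z. norm (P z) powr p0)" and PmB: "P \<in> borel_measurable lo"
    using Pm unfolding memLp_def by auto
  have Bc0: "0 \<le> Bc" using Bc_pos by simp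
  have pw: "AE z in lo. norm (berezin \<Omega> K \<phi> z) powr q \<le> Bc powr p0 * norm (P z) powr p0"
    using AEI
  proof (rule AE_mp, intro AE_I2 impI)
    fix z assume z: "z \<in> space lo" and I: "integrable lo (\<lambda>w. of_real (cmod (K z w)) * \<psi> w)"
    have "norm (berezin \<Omega> K \<phi> z) powr r \<le> Bc * norm (P z)"
      unfolding P_def \<psi>_def
      by (rule pointwise[OF _ phim iq r q1(2)]) (use z I in \<open>auto simp: \<psi>_def\<close>)
    then have "(norm (berezin \<Omega> K \<phi> z) powr r) powr p0 \<le> (Bc * norm (P z)) powr p0"
      by (rule powr_mono2[rotated 2]) (use p0 in auto)
    then show "norm (berezin \<Omega> K \<phi> z) powr q \<le> Bc powr p0 * norm (P z) powr p0"
      using Bc0 unfolding q_def by (simp add: powr_powr powr_mult)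
  qed
  have Bm: "berezin \<Omega> K \<phi> \<in> borel_measurable lo" by (rule berezin_meas[OF phim])
  have iB: "integrable lo (\<lambda>z. norm (berezin \<Omega> K \<phi> z) powr q)"
  proof (rule Bochner_Integration.integrable_bound)
    show "integrable lo (\<lambda>z. Bc powr p0 * norm (P z) powr p0)" using iP by (rule integrable_mult_right)
    show "(\<lambda>z. norm (berezin \<Omega> K \<phi> z) powr q) \<in> borel_measurable lo" using Bm by measurable
    show "AE z in lo. norm (norm (berezin \<Omega> K \<phi> z) powr q) \<le> norm (Bc powr p0 * norm (P z) powr p0)"
      using pw by (rule AE_mp) (auto intro!: AE_I2)
  qed
  have mem: "memLp \<Omega> (ereal q) (berezin \<Omega> K \<phi>)"
    unfolding memLp_def using Bm iB by simp
  define X where "X = (\<integral>z. norm (berezin \<Omega> K \<phi> z) powr q \<partial>lo)"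
  define Y where "Y = (\<integral>z. norm (P z) powr p0 \<partial>lo)"
  define J where "J = (\<integral>w. norm (\<phi> w) powr q \<partial>lo)"
  have Y0: "0 \<le> Y" unfolding Y_def by (rule integral_nonneg_AE) simp
  have J0: "0 \<le> J" unfolding J_def by (rule integral_nonneg_AE) simp
  have X0: "0 \<le> X" unfolding X_def by (rule integral_nonneg_AE) simp
  have XY: "X \<le> Bc powr p0 * Y"
  proof -
    have "X \<le> (\<integral>z. Bc powr p0 * norm (P z) powr p0 \<partial>lo)"
      unfolding X_def by (rule integral_mono_AE[OF iB integrable_mult_right[OF iP] pw])
    then show ?thesis unfolding Y_def by simp
  qed
  have LP: "Y powr (1 / p0) \<le> C * J powr (1 / p0)"
    using C(2)[OF psi] p0 unfolding Lpnorm_def Y_def J_def P_def by (simp add: psi_eq)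
  have YJ: "Y \<le> C powr p0 * J"
  proof -
    have "Y = (Y powr (1 / p0)) powr p0" using Y0 p0 by (simp add: powr_powr)
    also have "\<dots> \<le> (C * J powr (1 / p0)) powr p0"
      by (rule powr_mono2[OF _ _ LP]) (use p0 in auto)
    also have "\<dots> = C powr p0 * J" using C(1) J0 p0 by (simp add: powr_mult powr_powr)
    finally show ?thesis .
  qed
  have XJ: "X \<le> (Bc * C) powr p0 * J"
  proof -
    have "X \<le> Bc powr p0 * (C powr p0 * J)"
      using XY YJ by (smt (verit) mult_left_mono powr_ge_zero)
    then show ?thesis using Bc0 C(1) by (simp add: powr_mult mult_ac)
  qed
  have "X powr (1 / q) \<le> ((Bc * C) powr p0 * J) powr (1 / q)"
    by (rule powr_mono2[OF _ X0 XJ]) (use q1 in auto)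
  also have "\<dots> = (Bc * C) powr (1 / r) * J powr (1 / q)"
    using Bc0 C(1) J0 p0 r unfolding q_def by (simp add: powr_mult powr_powr)
  finally have "X powr (1 / q) \<le> (Bc * C) powr (1 / r) * J powr (1 / q)" .
  then have "Lpnorm \<Omega> (ereal q) (berezin \<Omega> K \<phi>) \<le> (Bc * C) powr (1 / r) * Lpnorm \<Omega> (ereal q) \<phi>"
    unfolding Lpnorm_def X_def J_def by simp
  with mem show ?thesis unfolding q_def by simp
qed

end
context bsetup begin

lemma inf_case:
  fixes \<phi> :: "complex ^ 'n \<Rightarrow> complex"
  assumes phi: "memLp \<Omega> \<infinity> \<phi>"
  shows "(\<forall>z\<in>\<Omega>. integrable lo (\<lambda>w. \<phi> w * of_real (kk z w))) \<and> memLp \<Omega> \<infinity> (berezin \<Omega> K \<phi>)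
     \<and> Lpnorm \<Omega> \<infinity> (berezin \<Omega> K \<phi>) \<le> 1 * Lpnorm \<Omega> \<infinity> \<phi>"
proof -
  have phim: "\<phi> \<in> borel_measurable lo" using phi unfolding memLp_def by simp
  obtain C1 where C1: "AE w in lo. norm (\<phi> w) \<le> C1" using phi unfolding memLp_def by auto
  have ints: "\<forall>z\<in>\<Omega>. integrable lo (\<lambda>w. \<phi> w * of_real (kk z w))"
    using int_phi_kk_inf[OF _ phim C1] by blast
  have bnd: "AE z in lo. norm (berezin \<Omega> K \<phi> z) \<le> C" if C: "AE w in lo. norm (\<phi> w) \<le> C" for C
  proof (rule AE_I2)
    fix z assume "z \<in> space lo"
    then have z: "z \<in> \<Omega>" by simp
    have int: "integrable lo (\<lambda>w. \<phi> w * of_real (kk z w))" using ints z by blast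
    have "norm (berezin \<Omega> K \<phi> z) \<le> (\<integral>w. norm (\<phi> w * of_real (kk z w)) \<partial>lo)"
      unfolding berezin_kk by (rule integral_norm_bound)
    also have "\<dots> \<le> (\<integral>w. C * kk z w \<partial>lo)"
    proof (rule integral_mono_AE[OF integrable_norm[OF int] integrable_mult_right[OF kk_int[OF z]]])
      show "AE w in lo. norm (\<phi> w * of_real (kk z w)) \<le> C * kk z w"
        using C
      proof (rule AE_mp, intro AE_I2 impI)
        fix w assume "w \<in> space lo" "norm (\<phi> w) \<le> C"
        then show "norm (\<phi> w * of_real (kk z w)) \<le> C * kk z w"
          using kk_nonneg[OF z, of w] by (simp add: norm_mult mult_right_mono)
      qed
    qed
    also have "\<dots> = C" using kk_one[OF z] by simp
    finally show "norm (berezin \<Omega> K \<phi> z) \<le> C" .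
  qed
  have mem: "memLp \<Omega> \<infinity> (berezin \<Omega> K \<phi>)"
    unfolding memLp_def using berezin_meas[OF phim] bnd[OF C1] by auto
  have "Inf {C. C \<ge> 0 \<and> (AE x in lo. norm (berezin \<Omega> K \<phi> x) \<le> C)}
      \<le> Inf {C. C \<ge> 0 \<and> (AE x in lo. norm (\<phi> x) \<le> C)}"
  proof (rule cInf_superset_mono)
    have "max C1 0 \<in> {C. C \<ge> 0 \<and> (AE x in lo. norm (\<phi> x) \<le> C)}"
    proof -
      have "AE x in lo. norm (\<phi> x) \<le> max C1 0" using C1 by (rule AE_mp) (auto intro!: AE_I2)
      then show ?thesis by simp
    qed
    then show "{C. C \<ge> 0 \<and> (AE x in lo. norm (\<phi> x) \<le> C)} \<noteq> {}" by blast
    show "bdd_below {C. C \<ge> 0 \<and> (AE x in lo. norm (berezin \<Omega> K \<phi> x) \<le> C)}"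
      by (rule bdd_belowI[of _ 0]) auto
    show "{C. C \<ge> 0 \<and> (AE x in lo. norm (\<phi> x) \<le> C)}
        \<subseteq> {C. C \<ge> 0 \<and> (AE x in lo. norm (berezin \<Omega> K \<phi> x) \<le> C)}"
      using bnd by blast
  qed
  then have "Lpnorm \<Omega> \<infinity> (berezin \<Omega> K \<phi>) \<le> 1 * Lpnorm \<Omega> \<infinity> \<phi>"
    unfolding Lpnorm_def by simp
  with ints mem show ?thesis by blast
qed

end

theorem proposition1:
  fixes \<Omega> :: "(complex ^ 'n) set"
    and K :: "complex ^ 'n \<Rightarrow> complex ^ 'n \<Rightarrow> complex"
    and p0 :: real
  assumes "domain_Cn \<Omega>"
    and "is_bergman_kernel \<Omega> K"
    and "property_BR \<Omega> K"
    and "1 < p0"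
    and "abs_proj_bounded \<Omega> K (ereal p0)"
  shows "(\<forall>p::ereal. ereal p0 \<le> p \<longrightarrow>
           (\<exists>C. \<forall>\<phi>. memLp \<Omega> p \<phi> \<longrightarrow>
              (\<forall>z\<in>\<Omega>. integrable (lebesgue_on \<Omega>)
                   (\<lambda>w. \<phi> w * of_real ((cmod (K w z))\<^sup>2 / Re (K z z)))) \<and>
              memLp \<Omega> p (berezin \<Omega> K \<phi>) \<and>
              Lpnorm \<Omega> p (berezin \<Omega> K \<phi>) \<le> C * Lpnorm \<Omega> p \<phi>))
       \<and> Lp_opnorm \<Omega> (ereal p0) (berezin \<Omega> K)
           \<le> BR_const \<Omega> K * Lp_opnorm \<Omega> (ereal p0) (abs_bergman_proj \<Omega> K)"
proof -
  have Om: "open \<Omega>" "\<Omega> \<noteq> {}" using assms(1) unfolding domain_Cn_def by auto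
  interpret bsetup \<Omega> K by unfold_locales (use Om assms(2,3) in auto)
  have p0: "1 < p0" by (rule assms(4))
  have H: "abs_proj_bounded \<Omega> K (ereal p0)" by (rule assms(5))
  obtain C0 where H': "\<And>f. memLp \<Omega> (ereal p0) f \<Longrightarrow>
      Lpnorm \<Omega> (ereal p0) (abs_bergman_proj \<Omega> K f) \<le> C0 * Lpnorm \<Omega> (ereal p0) f"
    using H unfolding abs_proj_bounded_def by blast
  have Lp0: "0 \<le> Lpnorm \<Omega> (ereal p) f" for p f
    unfolding Lpnorm_def by simp
  define C where "C = max C0 0"
  have C: "0 \<le> C" "\<And>f. memLp \<Omega> (ereal p0) f \<Longrightarrow>
      Lpnorm \<Omega> (ereal p0) (abs_bergman_proj \<Omega> K f) \<le> C * Lpnorm \<Omega> (ereal p0) f"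
  proof -
    show "0 \<le> C" unfolding C_def by simp
    fix f assume "memLp \<Omega> (ereal p0) f"
    then have "Lpnorm \<Omega> (ereal p0) (abs_bergman_proj \<Omega> K f) \<le> C0 * Lpnorm \<Omega> (ereal p0) f" by (rule H')
    also have "\<dots> \<le> C * Lpnorm \<Omega> (ereal p0) f" unfolding C_def by (rule mult_right_mono[OF _ Lp0]) simp
    finally show "Lpnorm \<Omega> (ereal p0) (abs_bergman_proj \<Omega> K f) \<le> C * Lpnorm \<Omega> (ereal p0) f" .
  qed
  have kk_eq: "(\<lambda>w. \<phi> w * of_real ((cmod (K w z))\<^sup>2 / Re (K z z))) = (\<lambda>w. \<phi> w * of_real (kk z w))" for \<phi> z
    unfolding kk_def ..
  have part1: "\<exists>C. \<forall>\<phi>. memLp \<Omega> p \<phi> \<longrightarrow>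
              (\<forall>z\<in>\<Omega>. integrable (lebesgue_on \<Omega>)
                   (\<lambda>w. \<phi> w * of_real ((cmod (K w z))\<^sup>2 / Re (K z z)))) \<and>
              memLp \<Omega> p (berezin \<Omega> K \<phi>) \<and>
              Lpnorm \<Omega> p (berezin \<Omega> K \<phi>) \<le> C * Lpnorm \<Omega> p \<phi>" if pp: "ereal p0 \<le> p" for p
  proof (cases p)
    case PInf
    show ?thesis unfolding PInf kk_eq using inf_case by blast
  next
    case MInf
    then show ?thesis using pp by simp
  next
    case (real q)
    define r where "r = q / p0"
    have qp: "p0 \<le> q" using pp real by simp
    have r1: "1 \<le> r" unfolding r_def using qp p0 by simp
    have qr: "q = r * p0" unfolding r_def using p0 by simp
    show ?thesis
    proof (intro exI allI impI conjI)
      fix \<phi> :: "complex ^ 'n \<Rightarrow> complex"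
      assume phi: "memLp \<Omega> p \<phi>"
      then have phi': "memLp \<Omega> (ereal (r * p0)) \<phi>" using real qr by simp
      have cr: "memLp \<Omega> (ereal (r * p0)) (berezin \<Omega> K \<phi>) \<and>
        Lpnorm \<Omega> (ereal (r * p0)) (berezin \<Omega> K \<phi>) \<le> (Bc * C) powr (1 / r) * Lpnorm \<Omega> (ereal (r * p0)) \<phi>"
        by (rule core[OF p0 H C r1 phi'])
      then show "memLp \<Omega> p (berezin \<Omega> K \<phi>)" using real qr by simp
      show "Lpnorm \<Omega> p (berezin \<Omega> K \<phi>) \<le> (Bc * C) powr (1 / r) * Lpnorm \<Omega> p \<phi>"
        using cr real qr by simp
      have phim: "\<phi> \<in> borel_measurable lo" and iq: "integrable lo (\<lambda>w. norm (\<phi> w) powr q)"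
        using phi real unfolding memLp_def by auto
      show "\<forall>z\<in>\<Omega>. integrable lo (\<lambda>w. \<phi> w * of_real ((cmod (K w z))\<^sup>2 / Re (K z z)))"
        unfolding kk_eq using int_phi_kk[OF _ phim iq] qp p0 by simp
    qed
  qed
  define SB where "SB = {C. C \<ge> 0 \<and> (\<forall>f. memLp \<Omega> (ereal p0) f \<longrightarrow>
      Lpnorm \<Omega> (ereal p0) (berezin \<Omega> K f) \<le> C * Lpnorm \<Omega> (ereal p0) f)}"
  define SP where "SP = {C. C \<ge> 0 \<and> (\<forall>f. memLp \<Omega> (ereal p0) f \<longrightarrow>
      Lpnorm \<Omega> (ereal p0) (abs_bergman_proj \<Omega> K f) \<le> C * Lpnorm \<Omega> (ereal p0) f)}"
  have SPne: "SP \<noteq> {}" using C unfolding SP_def by blast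
  have BSP: "Bc * D \<in> SB" if D: "D \<in> SP" for D
  proof -
    have D0: "0 \<le> D" using D unfolding SP_def by simp
    have "Lpnorm \<Omega> (ereal p0) (berezin \<Omega> K f) \<le> Bc * D * Lpnorm \<Omega> (ereal p0) f"
      if f: "memLp \<Omega> (ereal p0) f" for f
    proof -
      have "Lpnorm \<Omega> (ereal (1 * p0)) (berezin \<Omega> K f) \<le> (Bc * D) powr (1 / 1) * Lpnorm \<Omega> (ereal (1 * p0)) f"
        by (rule core[OF p0 H D0, THEN conjunct2]) (use D f in \<open>auto simp: SP_def\<close>)
      then show ?thesis using D0 Bc_pos by simp
    qed
    then show ?thesis unfolding SB_def using D0 Bc_pos by simp
  qed
  have "Inf SB \<le> Bc * Inf SP"
  proof -
    have "Inf SB / Bc \<le> Inf SP"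
    proof (rule cInf_greatest[OF SPne])
      fix D assume "D \<in> SP"
      then have "Inf SB \<le> Bc * D"
        by (intro cInf_lower BSP) (auto simp: SB_def intro: bdd_belowI[of _ 0])
      then show "Inf SB / Bc \<le> D" using Bc_pos by (simp add: divide_le_eq mult.commute)
    qed
    then show ?thesis using Bc_pos by (simp add: divide_le_eq mult.commute)
  qed
  then have part2: "Lp_opnorm \<Omega> (ereal p0) (berezin \<Omega> K)
           \<le> BR_const \<Omega> K * Lp_opnorm \<Omega> (ereal p0) (abs_bergman_proj \<Omega> K)"
    unfolding Lp_opnorm_def SB_def SP_def Bc_def .
  show ?thesis using part1 part2 by blast
qed

end
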